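(* Let $N,\beta,\mu,\gamma>0$ with $\frac{\beta N}{\mu+\gamma}>1$ and $*:=N-\frac{\mu+\gamma}{\beta}$. For $a,b\in(0,N)$ define $$V(a,b)=\inf_{t>0}\ \inf\Big\{\tfrac12\int_0^t|u(s)|^2ds:\ u\in L^2([0,t]),\ \phi(t)=b,\ \text{where } \phi(s)=a+\int_0^s\phi(\theta)(\beta N-\mu-\gamma-\beta\phi(\theta))d\theta+\int_0^s\phi(\theta)(N-\phi(\theta))u(\theta)d\theta\Big\},$$ and set $\overline{V}_\rho=V( *,\rho)$, $\overline{V}_{-\rho}=V( *,N-\rho)$ for small $\rho>0$. Then $$\lim_{\rho\to0}\overline{V}_\rho=\lim_{\rho\to0}\overline{V}_{-\rho}=\infty.$$
   Context: $V(a,b)$ is the large-deviation quasi-potential (minimal control cost) for moving from $a$ to $b$ for the SDE $dI=I([\beta N-\mu-\gamma-\beta I]dt+\sigma(N-I)dB)$; $*$ is its positive deterministic equilibrium. *)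

theory Defs
  imports "HOL-Analysis.Analysis"
begin

definition admissible ::
  "real \<Rightarrow> real \<Rightarrow> real \<Rightarrow> real \<Rightarrow> real \<Rightarrow> real \<Rightarrow> real
     \<Rightarrow> (real \<Rightarrow> real) \<Rightarrow> (real \<Rightarrow> real) \<Rightarrow> bool" where
  "admissible N \<beta> \<mu> \<gamma> a b t u \<phi> \<longleftrightarrow>
     u \<in> borel_measurable lborel \<and>
     set_integrable lborel {0..t} (\<lambda>s. (u s)\<^sup>2) \<and>
     continuous_on {0..t} \<phi> \<and>
     (\<forall>s\<in>{0..t}. \<phi> s = a
        + (LINT \<theta>:{0..s}|lborel. \<phi> \<theta> * (\<beta> * N - \<mu> - \<gamma> - \<beta> * \<phi> \<theta>))
        + (LINT \<theta>:{0..s}|lborel. \<phi> \<theta> * (N - \<phi> \<theta>) * u \<theta>)) \<and>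
     \<phi> t = b"

text \<open>Quasi-potential V(a,b); the infimum is taken in the extended reals, so
  that it equals \<infinity> when no admissible control exists.\<close>
definition quasi_potential ::
  "real \<Rightarrow> real \<Rightarrow> real \<Rightarrow> real \<Rightarrow> real \<Rightarrow> real \<Rightarrow> ereal" where
  "quasi_potential N \<beta> \<mu> \<gamma> a b =
     (INF t\<in>{0<..}. Inf {ereal ((1/2) * (LINT s:{0..t}|lborel. (u s)\<^sup>2)) | u.
                            \<exists>\<phi>. admissible N \<beta> \<mu> \<gamma> a b t u \<phi>})"

end

theory Submission
  imports Defs
begin

lemma levels:
  fixes Y g w :: "real \<Rightarrow> real" and t a0 K :: real
  assumes cont: "continuous_on {0..t} Y"
    and gi: "g integrable_on {0..t}" and wi: "w integrable_on {0..t}"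
    and w0: "\<forall>\<theta>\<in>{0..t}. 0 \<le> w \<theta>"
    and eq: "\<forall>q r. 0 \<le> q \<longrightarrow> q \<le> r \<longrightarrow> r \<le> t \<longrightarrow> Y q - Y r = integral {q..r} g"
    and bnd: "\<forall>\<theta>\<in>{0..t}. 0 < Y \<theta> \<longrightarrow> Y \<theta> \<le> a0 \<longrightarrow> g \<theta> \<le> K * Y \<theta> * w \<theta>"
    and Kpos: "K > 0"
  shows "0 \<le> p \<Longrightarrow> p \<le> t \<Longrightarrow> a \<le> Y p \<Longrightarrow> 0 < a \<Longrightarrow> a \<le> a0 \<Longrightarrow> Y t \<le> a / 2^n
         \<Longrightarrow> real n / (2*K) \<le> integral {p..t} w"
proof (induction n arbitrary: p a)
  case 0
  have "w integrable_on {p..t}" using wi integrable_on_subinterval 0 by (meson atLeastatMost_subset_iff order_refl)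
  then have "0 \<le> integral {p..t} w" using w0 0 by (intro integral_nonneg) auto
  then show ?case by simp
next
  case (Suc n)
  have contp: "continuous_on {p..t} Y" using Suc.prems by (intro continuous_on_subset[OF cont]) auto
  have Ytlt: "Y t < a" using Suc.prems
  proof -
    have "a / 2^Suc n < a" using Suc.prems(4) by (simp add: divide_less_eq one_less_power[of 2 "Suc n", simplified])
    then show ?thesis using Suc.prems(6) by linarith
  qed
  have Yt2: "Y t \<le> a/2"
  proof -
    have "a / 2^Suc n \<le> a / 2" using Suc.prems(4) by (simp add: divide_le_eq one_le_power)
    then show ?thesis using Suc.prems(6) by linarith
  qed
  define S where "S = {\<theta>\<in>{p..t}. (\<lambda>_. a) \<theta> \<le> Y \<theta>}"
  have Sclosed: "closed S" unfolding S_def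
    by (rule continuous_on_closed_Collect_le) (auto intro: contp continuous_on_const)
  have Sne: "S \<noteq> {}" using Suc.prems unfolding S_def by auto
  have Sbdd: "bdd_above S" unfolding S_def by (rule bdd_aboveI[of _ t]) auto
  define q where "q = Sup S"
  have qS: "q \<in> S" unfolding q_def using closed_contains_Sup Sne Sbdd Sclosed by blast
  have qt: "p \<le> q" "q \<le> t" "a \<le> Y q" using qS unfolding S_def by auto
  have qup: "\<And>x. x \<in> S \<Longrightarrow> x \<le> q" unfolding q_def using Sbdd by (simp add: cSup_upper)
  have contq: "continuous_on {q..t} Y" using cont qt Suc.prems by (intro continuous_on_subset[OF cont]) auto
  obtain x where x: "q \<le> x" "x \<le> t" "Y x = a" using IVT2'[of Y t a q, OF _ _ qt(2) contq] Ytlt qt by auto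
  have "x \<in> S" using x qt unfolding S_def by auto
  then have Yq: "Y q = a" using qup x by force
  have above: "\<And>\<theta>. q < \<theta> \<Longrightarrow> \<theta> \<le> t \<Longrightarrow> Y \<theta> < a"
  proof (rule ccontr)
    fix \<theta> assume "q < \<theta>" "\<theta> \<le> t" "\<not> Y \<theta> < a"
    then have "\<theta> \<in> S" using qt unfolding S_def by auto
    then show False using qup \<open>q < \<theta>\<close> by force
  qed
  define R where "R = {\<theta>\<in>{q..t}. Y \<theta> \<le> (\<lambda>_. a/2) \<theta>}"
  have Rclosed: "closed R" unfolding R_def
    by (rule continuous_on_closed_Collect_le) (auto intro: contq continuous_on_const)
  have Rne: "R \<noteq> {}" using Yt2 qt unfolding R_def by auto
  have Rbdd: "bdd_below R" unfolding R_def by (rule bdd_belowI[of _ q]) auto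
  define r where "r = Inf R"
  have rR: "r \<in> R" unfolding r_def using closed_contains_Inf Rne Rbdd Rclosed by blast
  have rt: "q \<le> r" "r \<le> t" "Y r \<le> a/2" using rR unfolding R_def by auto
  have rlow: "\<And>x. x \<in> R \<Longrightarrow> r \<le> x" unfolding r_def using Rbdd by (simp add: cInf_lower)
  have contr: "continuous_on {q..r} Y" using cont qt rt Suc.prems by (intro continuous_on_subset[OF cont]) auto
  obtain y where y: "q \<le> y" "y \<le> r" "Y y = a/2" using IVT2'[of Y r "a/2" q, OF _ _ rt(1) contr] rt Yq Suc.prems(4) by auto
  have "y \<in> R" using y rt unfolding R_def by auto
  then have Yr: "Y r = a/2" using rlow y by force
  have below: "\<And>\<theta>. q \<le> \<theta> \<Longrightarrow> \<theta> < r \<Longrightarrow> a/2 < Y \<theta>"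
  proof (rule ccontr)
    fix \<theta> assume "q \<le> \<theta>" "\<theta> < r" "\<not> a/2 < Y \<theta>"
    then have "\<theta> \<in> R" using rt unfolding R_def by auto
    then show False using rlow \<open>\<theta> < r\<close> by force
  qed
  have band: "a/2 \<le> Y \<theta> \<and> Y \<theta> \<le> a" if "\<theta> \<in> {q..r}" for \<theta>
  proof -
    have "a/2 \<le> Y \<theta>" using below[of \<theta>] that Yr by (cases "\<theta> = r") auto
    moreover have "Y \<theta> \<le> a" using above[of \<theta>] that Yq rt by (cases "\<theta> = q") auto
    ultimately show ?thesis by simp
  qed
  have sub: "{q..r} \<subseteq> {0..t}" using qt rt Suc.prems by auto
  have gqr: "g integrable_on {q..r}" and wqr: "w integrable_on {q..r}"
    using integrable_on_subinterval[OF gi sub] integrable_on_subinterval[OF wi sub] by auto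
  have pt: "g \<theta> \<le> K * a * w \<theta>" if "\<theta> \<in> {q..r}" for \<theta>
  proof -
    have th: "\<theta> \<in> {0..t}" using that sub by auto
    have b: "a/2 \<le> Y \<theta>" "Y \<theta> \<le> a" using band[OF that] by auto
    have "g \<theta> \<le> K * Y \<theta> * w \<theta>" using bnd th b Suc.prems by force
    also have "\<dots> \<le> K * a * w \<theta>" using b Kpos w0 th by (intro mult_right_mono) auto
    finally show ?thesis .
  qed
  have "a/2 = Y q - Y r" using Yq Yr by simp
  also have "\<dots> = integral {q..r} g" using eq qt rt Suc.prems by auto
  also have "\<dots> \<le> integral {q..r} (\<lambda>\<theta>. K * a * w \<theta>)"
    using gqr integrable_on_mult_right[OF wqr, of "K*a"] pt by (intro integral_le) auto
  also have "\<dots> = K * a * integral {q..r} w" by simp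
  finally have I1: "a/2 \<le> K * a * integral {q..r} w" .
  have I1': "1 / (2*K) \<le> integral {q..r} w"
  proof -
    have "a * (1/2) \<le> a * (K * integral {q..r} w)" using I1 by (simp add: ac_simps)
    then have "1/2 \<le> K * integral {q..r} w" using Suc.prems(4) mult_le_cancel_left_pos by blast
    then show ?thesis using Kpos by (simp add: field_simps)
  qed
  have IH: "real n / (2*K) \<le> integral {r..t} w"
  proof (rule Suc.IH)
    show "0 \<le> r" "r \<le> t" using qt rt Suc.prems by auto
    show "a/2 \<le> Y r" using Yr by simp
    show "0 < a/2" "a/2 \<le> a0" using Suc.prems by auto
    show "Y t \<le> a / 2 / 2 ^ n" using Suc.prems(6) by (simp add: divide_divide_eq_left mult.commute)
  qed
  have wpt: "w integrable_on {p..t}" using wi integrable_on_subinterval Suc.prems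
    by (meson atLeastatMost_subset_iff order_refl)
  have wqt: "w integrable_on {q..t}" using wi integrable_on_subinterval qt Suc.prems
    by (meson atLeastatMost_subset_iff order_refl order_trans)
  have "integral {p..t} w = integral {p..q} w + integral {q..t} w"
    using Henstock_Kurzweil_Integration.integral_combine[OF qt(1) qt(2) wpt] by simp
  also have "integral {q..t} w = integral {q..r} w + integral {r..t} w"
    using Henstock_Kurzweil_Integration.integral_combine[OF rt(1) rt(2) wqt] by simp
  finally have split: "integral {p..t} w = integral {p..q} w + integral {q..r} w + integral {r..t} w" by simp
  have "w integrable_on {p..q}" using wpt qt by (meson atLeastatMost_subset_iff order_refl integrable_on_subinterval)
  then have "0 \<le> integral {p..q} w" using w0 qt Suc.prems by (intro integral_nonneg) auto
  then have "1/(2*K) + real n/(2*K) \<le> integral {p..t} w" using split I1' IH by linarith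
  then show ?case by (simp add: add_divide_distrib)
qed


lemma adm_facts:
  assumes adm: "admissible N \<beta> \<mu> \<gamma> a b t u \<phi>" and t0: "0 \<le> t"
  defines "f \<equiv> \<lambda>\<theta>. \<phi> \<theta> * (\<beta> * N - \<mu> - \<gamma> - \<beta> * \<phi> \<theta>) + \<phi> \<theta> * (N - \<phi> \<theta>) * u \<theta>"
  shows "continuous_on {0..t} \<phi>" "(\<lambda>s. (u s)\<^sup>2) integrable_on {0..t}"
    "(LINT s:{0..t}|lborel. (u s)\<^sup>2) = integral {0..t} (\<lambda>s. (u s)\<^sup>2)"
    "f integrable_on {0..t}" "\<forall>s\<in>{0..t}. \<phi> s = a + integral {0..s} f" "\<phi> t = b"
proof -
  have um: "u \<in> borel_measurable lborel" and u2: "set_integrable lborel {0..t} (\<lambda>s. (u s)\<^sup>2)"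
    and cont: "continuous_on {0..t} \<phi>"
    and eq: "\<forall>s\<in>{0..t}. \<phi> s = a
        + (LINT \<theta>:{0..s}|lborel. \<phi> \<theta> * (\<beta> * N - \<mu> - \<gamma> - \<beta> * \<phi> \<theta>))
        + (LINT \<theta>:{0..s}|lborel. \<phi> \<theta> * (N - \<phi> \<theta>) * u \<theta>)"
    and bt: "\<phi> t = b"
    using adm unfolding admissible_def by auto
  show "continuous_on {0..t} \<phi>" "\<phi> t = b" using cont bt by auto
  show "(\<lambda>s. (u s)\<^sup>2) integrable_on {0..t}"
    "(LINT s:{0..t}|lborel. (u s)\<^sup>2) = integral {0..t} (\<lambda>s. (u s)\<^sup>2)"
    using set_borel_integral_eq_integral[OF u2] by auto
  define f1 where "f1 = (\<lambda>\<theta>. \<phi> \<theta> * (\<beta> * N - \<mu> - \<gamma> - \<beta> * \<phi> \<theta>))"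
  define h where "h = (\<lambda>\<theta>. \<phi> \<theta> * (N - \<phi> \<theta>))"
  define f2 where "f2 = (\<lambda>\<theta>. h \<theta> * u \<theta>)"
  have hc: "continuous_on {0..t} h" unfolding h_def by (intro continuous_intros cont)
  have f1c: "continuous_on {0..t} f1" unfolding f1_def by (intro continuous_intros cont)
  obtain B where B: "B > 0" "\<forall>\<theta>\<in>{0..t}. \<bar>h \<theta>\<bar> \<le> B"
  proof -
    have "bounded (h ` {0..t})" using compact_continuous_image[OF hc] compact_imp_bounded by blast
    then obtain B where "B > 0" "\<forall>x\<in>h ` {0..t}. norm x \<le> B" using bounded_pos by blast
    then show ?thesis using that by auto
  qed
  have ind_int: "set_integrable lborel {0..t} (\<lambda>_. 1::real)"
    unfolding set_integrable_def by (rule borel_integrable_compact) (auto intro: continuous_on_const)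
  have dom: "integrable lborel (\<lambda>x. indicator {0..t} x *\<^sub>R (B * (1 + (u x)\<^sup>2)))"
  proof -
    have "integrable lborel (\<lambda>x. B * (indicator {0..t} x *\<^sub>R (1::real) + indicator {0..t} x *\<^sub>R (u x)\<^sup>2))"
      using ind_int u2 unfolding set_integrable_def by (intro integrable_mult_right Bochner_Integration.integrable_add)
    then show ?thesis by (simp add: algebra_simps)
  qed
  have f1i: "set_integrable lborel {0..s} f1" if "s \<in> {0..t}" for s
    unfolding set_integrable_def using that
    by (intro borel_integrable_compact) (auto intro: continuous_on_subset[OF f1c])
  have f2i: "set_integrable lborel {0..s} f2" if s: "s \<in> {0..t}" for s
    unfolding set_integrable_def
  proof (rule Bochner_Integration.integrable_bound[OF dom])
    have "(\<lambda>x. indicator {0..s} x *\<^sub>R h x) \<in> borel_measurable borel"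
      using s by (intro borel_measurable_continuous_on_indicator) (auto intro: continuous_on_subset[OF hc])
    then have "(\<lambda>x. (indicator {0..s} x *\<^sub>R h x) * u x) \<in> borel_measurable borel"
      using um by measurable
    then show "(\<lambda>x. indicator {0..s} x *\<^sub>R f2 x) \<in> borel_measurable lborel"
      unfolding f2_def by (simp add: ac_simps)
    show "AE x in lborel. norm (indicator {0..s} x *\<^sub>R f2 x) \<le> norm (indicator {0..t} x *\<^sub>R (B * (1 + (u x)\<^sup>2)))"
    proof (rule AE_I2)
      fix x
      show "norm (indicator {0..s} x *\<^sub>R f2 x) \<le> norm (indicator {0..t} x *\<^sub>R (B * (1 + (u x)\<^sup>2)))"
      proof (cases "x \<in> {0..s}")
        case True
        then have xt: "x \<in> {0..t}" using s by auto
        have "\<bar>u x\<bar> \<le> 1 + (u x)\<^sup>2"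
        proof (cases "\<bar>u x\<bar> \<le> 1")
          case True then show ?thesis by (smt (verit) zero_le_power2)
        next
          case False
          then have "1 * \<bar>u x\<bar> \<le> \<bar>u x\<bar> * \<bar>u x\<bar>" by (intro mult_right_mono) auto
          then show ?thesis by (simp add: power2_eq_square abs_mult_self)
        qed
        then have "\<bar>h x\<bar> * \<bar>u x\<bar> \<le> B * (1 + (u x)\<^sup>2)"
          using B xt by (intro mult_mono) auto
        then show ?thesis using True xt using B(1) by (simp add: f2_def abs_mult)
      qed simp
    qed
  qed
  have eqf: "\<phi> s = a + integral {0..s} f" if s: "s \<in> {0..t}" for s
  proof -
    have "\<phi> s = a + integral {0..s} f1 + integral {0..s} f2"
      using eq s set_borel_integral_eq_integral(2)[OF f1i[OF s]] set_borel_integral_eq_integral(2)[OF f2i[OF s]]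
      unfolding f1_def f2_def h_def by (auto simp: ac_simps)
    moreover have "integral {0..s} f1 + integral {0..s} f2 = integral {0..s} f"
      using set_borel_integral_eq_integral(1)[OF f1i[OF s]] set_borel_integral_eq_integral(1)[OF f2i[OF s]]
      unfolding f_def f1_def f2_def h_def by (subst integral_add[symmetric]) (auto simp: ac_simps)
    ultimately show ?thesis by simp
  qed
  then show "\<forall>s\<in>{0..t}. \<phi> s = a + integral {0..s} f" by blast
  show "f integrable_on {0..t}"
  proof -
    have "t \<in> {0..t}" using t0 by auto
    then have "(\<lambda>\<theta>. f1 \<theta> + f2 \<theta>) integrable_on {0..t}"
      using set_borel_integral_eq_integral(1)[OF f1i] set_borel_integral_eq_integral(1)[OF f2i] by (intro integrable_add) auto
    then show ?thesis unfolding f_def f1_def f2_def h_def by (simp add: ac_simps)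
  qed
qed


lemma amgm:
  fixes M v e :: real assumes "e > 0"
  shows "M * \<bar>v\<bar> - e \<le> M\<^sup>2 * v\<^sup>2 / (4*e)"
proof -
  have "0 \<le> (M * \<bar>v\<bar> - 2*e)\<^sup>2" by simp
  also have "(M * \<bar>v\<bar> - 2*e)\<^sup>2 = M\<^sup>2 * v\<^sup>2 - 4*e*(M*\<bar>v\<bar> - e)"
    by (simp add: power2_eq_square algebra_simps abs_mult_self)
  finally have "4*e*(M*\<bar>v\<bar> - e) \<le> M\<^sup>2 * v\<^sup>2" by simp
  then show ?thesis using assms by (simp add: field_simps)
qed

lemma diff_eq:
  fixes f \<phi> :: "real \<Rightarrow> real"
  assumes fi: "f integrable_on {0..t}" and eqf: "\<forall>s\<in>{0..t}. \<phi> s = a + integral {0..s} f"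
    and "0 \<le> q" "q \<le> r" "r \<le> t"
  shows "\<phi> r - \<phi> q = integral {q..r} f"
proof -
  have fr: "f integrable_on {0..r}" using assms by (intro integrable_on_subinterval[OF fi]) auto
  have "integral {0..q} f + integral {q..r} f = integral {0..r} f"
    using Henstock_Kurzweil_Integration.integral_combine[OF assms(3,4) fr] .
  moreover have "\<phi> r = a + integral {0..r} f" "\<phi> q = a + integral {0..q} f" using eqf assms by auto
  ultimately show ?thesis by simp
qed

lemma qp_lower:
  assumes "\<And>t u \<phi>. t > 0 \<Longrightarrow> admissible N \<beta> \<mu> \<gamma> a b t u \<phi> \<Longrightarrow> B \<le> (1/2) * (LINT s:{0..t}|lborel. (u s)\<^sup>2)"
  shows "ereal B \<le> quasi_potential N \<beta> \<mu> \<gamma> a b"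
  unfolding quasi_potential_def
  by (rule INF_greatest, rule Inf_greatest) (use assms in auto)

lemma bound_phi:
  fixes N \<beta> \<mu> \<gamma> :: real
  assumes "N > 0" "\<beta> > 0" "\<mu> > 0" "\<gamma> > 0" and st: "star = N - (\<mu> + \<gamma>) / \<beta>" "star > 0"
    and adm: "admissible N \<beta> \<mu> \<gamma> star \<rho> t u \<phi>" and t0: "t > 0"
    and rho: "\<rho> \<le> (star/2) / 2^n"
  shows "real n / (4 * (N\<^sup>2 / (2 * (\<beta>* star)))) \<le> (1/2) * (LINT s:{0..t}|lborel. (u s)\<^sup>2)"
proof -
  define c where "c = \<beta>* star"
  have c: "c = \<beta>*N - \<mu> - \<gamma>" "c > 0" using st assms unfolding c_def by (auto simp: field_simps)
  define f where "f \<equiv> \<lambda>\<theta>. \<phi> \<theta> * (\<beta> * N - \<mu> - \<gamma> - \<beta> * \<phi> \<theta>) + \<phi> \<theta> * (N - \<phi> \<theta>) * u \<theta>"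
  note F = adm_facts[OF adm less_imp_le[OF t0], folded f_def]
  define K where "K = N\<^sup>2 / (2*c)"
  have Kpos: "K > 0" using c assms unfolding K_def by auto
  have "(\<mu> + \<gamma>) / \<beta> > 0" using assms by simp
  then have starN: "star < N" using st by linarith
  have lev: "real n / (2*K) \<le> integral {0..t} (\<lambda>s. (u s)\<^sup>2)"
  proof (rule levels[where Y=\<phi> and g="\<lambda>\<theta>. - f \<theta>" and a0="star/2" and K=K])
    show "continuous_on {0..t} \<phi>" "(\<lambda>s. (u s)\<^sup>2) integrable_on {0..t}" using F by auto
    show "(\<lambda>\<theta>. - f \<theta>) integrable_on {0..t}" using F(4) by (rule integrable_neg)
    show "\<forall>\<theta>\<in>{0..t}. 0 \<le> (u \<theta>)\<^sup>2" by simp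
    show "\<forall>q r. 0 \<le> q \<longrightarrow> q \<le> r \<longrightarrow> r \<le> t \<longrightarrow> \<phi> q - \<phi> r = integral {q..r} (\<lambda>\<theta>. - f \<theta>)"
    proof (intro allI impI)
      fix q r :: real assume qr: "0 \<le> q" "q \<le> r" "r \<le> t"
      have "\<phi> r - \<phi> q = integral {q..r} f" using diff_eq[OF F(4) F(5) qr] .
      moreover have "integral {q..r} (\<lambda>\<theta>. - f \<theta>) = - integral {q..r} f" by (simp add: integral_neg)
      ultimately show "\<phi> q - \<phi> r = integral {q..r} (\<lambda>\<theta>. - f \<theta>)" by linarith
    qed
    show "K > 0" by (rule Kpos)
    show "\<forall>\<theta>\<in>{0..t}. 0 < \<phi> \<theta> \<longrightarrow> \<phi> \<theta> \<le> star/2 \<longrightarrow> - f \<theta> \<le> K * \<phi> \<theta> * (u \<theta>)\<^sup>2"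
    proof (intro ballI impI)
      fix \<theta> assume "0 < \<phi> \<theta>" "\<phi> \<theta> \<le> star/2"
      define y where "y = \<phi> \<theta>"
      define v where "v = u \<theta>"
      have y: "0 < y" "y \<le> star/2" using \<open>0 < \<phi> \<theta>\<close> \<open>\<phi> \<theta> \<le> star/2\<close> unfolding y_def by auto
      have "\<beta> * y \<le> c/2" using y assms unfolding c_def by (simp add: mult_left_mono)
      then have d: "y * (c/2) \<le> y * (c - \<beta>*y)" using y by (intro mult_left_mono) auto
      have "\<bar>y * (N - y) * v\<bar> \<le> y * N * \<bar>v\<bar>"
        using y starN by (simp add: abs_mult) (intro mult_right_mono mult_left_mono, auto)
      then have e: "- (y * (N - y) * v) \<le> y * N * \<bar>v\<bar>" by linarith
      have "- f \<theta> = - (y * (c - \<beta>*y)) - y * (N - y) * v" unfolding f_def y_def v_def c(1) by simp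
      also have "\<dots> \<le> y * (N * \<bar>v\<bar> - c/2)" using d e by (simp add: algebra_simps)
      also have "\<dots> \<le> y * (N\<^sup>2 * v\<^sup>2 / (4*(c/2)))" using y amgm[of "c/2" N v] c by (intro mult_left_mono) auto
      also have "\<dots> = K * y * v\<^sup>2" unfolding K_def by (simp add: field_simps)
      finally show "- f \<theta> \<le> K * \<phi> \<theta> * (u \<theta>)\<^sup>2" unfolding y_def v_def .
    qed
    show "0 \<le> (0::real)" "0 \<le> t" using t0 by auto
    have "\<phi> 0 = star" using F(5) t0 by auto
    then show "star/2 \<le> \<phi> 0" using st(2) by linarith
    show "0 < star/2" "star/2 \<le> star/2" using st by auto
    show "\<phi> t \<le> star / 2 / 2 ^ n" using F(6) rho by simp
  qed
  have "real n / (4*K) = (1/2) * (real n / (2*K))" by simp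
  also have "\<dots> \<le> (1/2) * integral {0..t} (\<lambda>s. (u s)\<^sup>2)" using lev by simp
  finally show ?thesis using F(3) unfolding K_def c_def by simp
qed

lemma bound_psi:
  fixes N \<beta> \<mu> \<gamma> :: real
  assumes "N > 0" "\<beta> > 0" "\<mu> > 0" "\<gamma> > 0" and st: "star = N - (\<mu> + \<gamma>) / \<beta>" "star > 0"
    and adm: "admissible N \<beta> \<mu> \<gamma> star (N - \<rho>) t u \<phi>" and t0: "t > 0"
    and rho: "\<rho> \<le> min ((\<mu>+\<gamma>)/(2*\<beta>)) (N/2) / 2^n"
  shows "real n / (4 * (N * min ((\<mu>+\<gamma>)/(2*\<beta>)) (N/2) / (2 * ((\<mu>+\<gamma>)/2)))) \<le> (1/2) * (LINT s:{0..t}|lborel. (u s)\<^sup>2)"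
proof -
  define a0 where "a0 = min ((\<mu>+\<gamma>)/(2*\<beta>)) (N/2)"
  define e where "e = (\<mu>+\<gamma>)/2"
  have e: "e > 0" using assms unfolding e_def by auto
  have a0: "a0 > 0" "a0 \<le> (\<mu>+\<gamma>)/(2*\<beta>)" "a0 \<le> N/2" using assms unfolding a0_def by auto
  define f where "f \<equiv> \<lambda>\<theta>. \<phi> \<theta> * (\<beta> * N - \<mu> - \<gamma> - \<beta> * \<phi> \<theta>) + \<phi> \<theta> * (N - \<phi> \<theta>) * u \<theta>"
  note F = adm_facts[OF adm less_imp_le[OF t0], folded f_def]
  define K where "K = N * a0 / (2*e)"
  have Kpos: "K > 0" using e a0 assms unfolding K_def by auto
  have lev: "real n / (2*K) \<le> integral {0..t} (\<lambda>s. (u s)\<^sup>2)"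
  proof (rule levels[where Y="\<lambda>\<theta>. N - \<phi> \<theta>" and g=f and a0=a0 and K=K])
    show "continuous_on {0..t} (\<lambda>\<theta>. N - \<phi> \<theta>)" using F(1) by (intro continuous_intros)
    show "(\<lambda>s. (u s)\<^sup>2) integrable_on {0..t}" using F by auto
    show "f integrable_on {0..t}" using F(4) .
    show "\<forall>\<theta>\<in>{0..t}. 0 \<le> (u \<theta>)\<^sup>2" by simp
    show "\<forall>q r. 0 \<le> q \<longrightarrow> q \<le> r \<longrightarrow> r \<le> t \<longrightarrow> (N - \<phi> q) - (N - \<phi> r) = integral {q..r} f"
    proof (intro allI impI)
      fix q r :: real assume qr: "0 \<le> q" "q \<le> r" "r \<le> t"
      have "\<phi> r - \<phi> q = integral {q..r} f" using diff_eq[OF F(4) F(5) qr] .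
      then show "(N - \<phi> q) - (N - \<phi> r) = integral {q..r} f" by linarith
    qed
    show "K > 0" by (rule Kpos)
    show "\<forall>\<theta>\<in>{0..t}. 0 < N - \<phi> \<theta> \<longrightarrow> N - \<phi> \<theta> \<le> a0 \<longrightarrow> f \<theta> \<le> K * (N - \<phi> \<theta>) * (u \<theta>)\<^sup>2"
    proof (intro ballI impI)
      fix \<theta> assume h1: "0 < N - \<phi> \<theta>" "N - \<phi> \<theta> \<le> a0"
      define y where "y = \<phi> \<theta>"
      define z where "z = N - \<phi> \<theta>"
      define v where "v = u \<theta>"
      have z: "0 < z" "z \<le> a0" "y = N - z" using h1 unfolding z_def y_def by auto
      have "\<beta> * z \<le> \<beta> * ((\<mu>+\<gamma>)/(2*\<beta>))" using z a0 assms by (intro mult_left_mono) auto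
      also have "\<dots> = e" using assms unfolding e_def by simp
      finally have bz: "\<beta> * z \<le> e" .
      have cy: "\<beta> * N - \<mu> - \<gamma> - \<beta> * y \<le> - e" 
      proof -
        have "\<beta>*y = \<beta>*N - \<beta>*z" using z(3) by (simp add: right_diff_distrib)
        then have "\<beta> * N - \<mu> - \<gamma> - \<beta> * y = \<beta>*z - 2*e" unfolding e_def by (simp add: field_simps)
        then show ?thesis using bz by linarith
      qed
      have yN: "N/2 \<le> y" "y \<le> N" using z a0 by auto
      have "y * (\<beta> * N - \<mu> - \<gamma> - \<beta> * y) \<le> y * (-e)" using cy yN assms by (intro mult_left_mono) auto
      also have "\<dots> \<le> (N/2) * (-e)" using yN e by (intro mult_right_mono_neg) auto
      finally have d: "y * (\<beta> * N - \<mu> - \<gamma> - \<beta> * y) \<le> - (N * e / 2)" by simp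
      have "\<bar>y * z * v\<bar> \<le> N * z * \<bar>v\<bar>"
        using yN z assms by (simp add: abs_mult) (intro mult_right_mono, auto)
      then have ev: "y * z * v \<le> (N * z) * \<bar>v\<bar>" by linarith
      have "f \<theta> = y * (\<beta> * N - \<mu> - \<gamma> - \<beta> * y) + y * z * v" unfolding f_def y_def z_def v_def by simp
      also have "\<dots> \<le> (N * z) * \<bar>v\<bar> - (N * e / 2)" using d ev by linarith
      also have "\<dots> \<le> (N * z)\<^sup>2 * v\<^sup>2 / (4 * (N * e / 2))" using amgm[of "N * e / 2" "N * z" v] e assms by auto
      also have "\<dots> = N * z * z * v\<^sup>2 / (2 * e)" using assms e by (simp add: field_simps power2_eq_square)
      also have "\<dots> \<le> N * a0 * z * v\<^sup>2 / (2 * e)"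
        using z assms e by (intro divide_right_mono mult_right_mono) (auto intro: mult_left_mono)
      also have "\<dots> = K * z * v\<^sup>2" unfolding K_def by simp
      finally show "f \<theta> \<le> K * (N - \<phi> \<theta>) * (u \<theta>)\<^sup>2" unfolding z_def v_def .
    qed
    show "0 \<le> (0::real)" "0 \<le> t" using t0 by auto
    have "\<phi> 0 = star" using F(5) t0 by auto
    then have "N - \<phi> 0 = (\<mu>+\<gamma>)/\<beta>" using st by simp
    moreover have "a0 \<le> (\<mu>+\<gamma>)/\<beta>" using a0(2) assms by (simp add: field_simps)
    ultimately show "a0 \<le> N - \<phi> 0" by simp
    show "0 < a0" "a0 \<le> a0" using a0 by auto
    show "N - \<phi> t \<le> a0 / 2 ^ n" using F(6) rho unfolding a0_def by simp
  qed
  have "real n / (4*K) = (1/2) * (real n / (2*K))" by simp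
  also have "\<dots> \<le> (1/2) * integral {0..t} (\<lambda>s. (u s)\<^sup>2)" using lev by simp
  finally have "real n / (4*K) \<le> (1/2) * (LINT s:{0..t}|lborel. (u s)\<^sup>2)" using F(3) by simp
  then show ?thesis by (simp only: K_def e_def a0_def)
qed


theorem proposition1:
  fixes N \<beta> \<mu> \<gamma> :: real
  assumes "N > 0" "\<beta> > 0" "\<mu> > 0" "\<gamma> > 0"
    and "\<beta> * N / (\<mu> + \<gamma>) > 1"
  defines "star \<equiv> N - (\<mu> + \<gamma>) / \<beta>"
  shows "((\<lambda>\<rho>. quasi_potential N \<beta> \<mu> \<gamma> star \<rho>) \<longlongrightarrow> \<infinity>) (at_right 0) \<and>
         ((\<lambda>\<rho>. quasi_potential N \<beta> \<mu> \<gamma> star (N - \<rho>)) \<longlongrightarrow> \<infinity>) (at_right 0)"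
proof -
  have "\<mu> + \<gamma> < \<beta> * N" using assms(5) assms(3,4) by (simp add: field_simps)
  then have "(\<mu> + \<gamma>) / \<beta> < N" using assms(2) by (simp add: field_simps)
  then have spos: "star > 0" unfolding star_def by simp
  have st: "star = N - (\<mu> + \<gamma>) / \<beta>" unfolding star_def by simp
  define K1 where "K1 = N\<^sup>2 / (2 * (\<beta> * star))"
  define a1 where "a1 = star / 2"
  define K2 where "K2 = N * min ((\<mu>+\<gamma>)/(2*\<beta>)) (N/2) / (2 * ((\<mu>+\<gamma>)/2))"
  define a2 where "a2 = min ((\<mu>+\<gamma>)/(2*\<beta>)) (N/2)"
  have K1: "K1 > 0" unfolding K1_def using assms spos by simp
  have a1: "a1 > 0" unfolding a1_def using spos by simp
  have a2: "a2 > 0" unfolding a2_def using assms by simp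
  have K2: "K2 > 0" unfolding K2_def using assms by simp
  have gen: "((\<lambda>\<rho>. Q \<rho>) \<longlongrightarrow> \<infinity>) (at_right 0)"
    if K: "K > 0" and a: "a > 0"
      and B: "\<And>n \<rho>. \<rho> \<le> a / 2^n \<Longrightarrow> ereal (real n / (4*K)) \<le> Q \<rho>" for K a :: real and Q :: "real \<Rightarrow> ereal"
    unfolding tendsto_PInfty
  proof
    fix r :: real
    obtain n where n: "4*K*r < real n" using reals_Archimedean2 by blast
    have rn: "r < real n / (4*K)" using n K by (simp add: field_simps)
    have "0 < a / 2^n" using a by simp
    then have "eventually (\<lambda>\<rho>. \<rho> \<in> {0<..<a / 2^n}) (at_right 0)" by (rule eventually_at_right_real)
    then show "eventually (\<lambda>\<rho>. ereal r < Q \<rho>) (at_right 0)"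
    proof (rule eventually_mono)
      fix \<rho> assume "\<rho> \<in> {0<..<a / 2^n}"
      then have "ereal (real n / (4*K)) \<le> Q \<rho>" by (intro B) auto
      moreover have "ereal r < ereal (real n / (4*K))" using rn by simp
      ultimately show "ereal r < Q \<rho>" by order
    qed
  qed
  have P1: "((\<lambda>\<rho>. quasi_potential N \<beta> \<mu> \<gamma> star \<rho>) \<longlongrightarrow> \<infinity>) (at_right 0)"
  proof (rule gen[OF K1 a1])
    fix n \<rho> assume r: "\<rho> \<le> a1 / 2^n"
    show "ereal (real n / (4*K1)) \<le> quasi_potential N \<beta> \<mu> \<gamma> star \<rho>"
      by (rule qp_lower) (use bound_phi[OF assms(1-4) st spos _ _ r[unfolded a1_def]] in \<open>auto simp: K1_def\<close>)
  qed
  have P2: "((\<lambda>\<rho>. quasi_potential N \<beta> \<mu> \<gamma> star (N - \<rho>)) \<longlongrightarrow> \<infinity>) (at_right 0)"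
  proof (rule gen[OF K2 a2])
    fix n \<rho> assume r: "\<rho> \<le> a2 / 2^n"
    show "ereal (real n / (4*K2)) \<le> quasi_potential N \<beta> \<mu> \<gamma> star (N - \<rho>)"
      by (rule qp_lower) (use bound_psi[OF assms(1-4) st spos _ _ r[unfolded a2_def]] in \<open>auto simp: K2_def\<close>)
  qed
  show ?thesis using P1 P2 by blast
qed

end
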